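(* Let $(N,C,\mathbf{A},k)$ be an instance with $|N|=n$ having at least one cohesive group, and let $c_{\max}$ be its maximum JR degree. If $n>k^2(c_{\max}-1)$, then the committee output by GreedyAV has JR degree $c_{\max}$.
   Context: An instance consists of voters $N=\{1,\dots,n\}$, candidates $C$, approval ballots $A_i\subseteq C$ for $i\in N$, and a committee size $k$ with $1\le k\le|C|$. $N'\subseteq N$ is a cohesive group if $|N'|\ge n/k$ and $|\bigcap_{i\in N'}A_i|\ge1$. A size-$k$ committee $W\subseteq C$ achieves JR degree $c$ if every cohesive group contains at least $c$ voters $i$ with $|A_i\cap W|\ge1$; its JR degree is the largest such $c$, and the maximum JR degree of the instance is the maximum over all size-$k$ committees. GreedyAV: start with $W=\emptyset$ and remaining voters $R=N$; repeat $k$ times: choose a candidate $c\notin W$ approved by the maximum number of voters in $R$ (ties arbitrary), add $c$ to $W$, and remove from $R$ all voters approving $c$; output $W$. *)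

theory Defs
  imports Complex_Main
begin

definition cohesive :: "nat set \<Rightarrow> (nat \<Rightarrow> 'c set) \<Rightarrow> nat \<Rightarrow> nat set \<Rightarrow> bool" where
  "cohesive N A k N' \<longleftrightarrow> N' \<subseteq> N \<and> real (card N') \<ge> real (card N) / real k
      \<and> card (\<Inter>i\<in>N'. A i) \<ge> 1"

definition achieves_jr_degree ::
  "nat set \<Rightarrow> (nat \<Rightarrow> 'c set) \<Rightarrow> nat \<Rightarrow> 'c set \<Rightarrow> nat \<Rightarrow> bool" where
  "achieves_jr_degree N A k W c \<longleftrightarrow>
     (\<forall>N'. cohesive N A k N' \<longrightarrow> card {i \<in> N'. card (A i \<inter> W) \<ge> 1} \<ge> c)"

definition jr_degree :: "nat set \<Rightarrow> (nat \<Rightarrow> 'c set) \<Rightarrow> nat \<Rightarrow> 'c set \<Rightarrow> nat" where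
  "jr_degree N A k W = (GREATEST c. achieves_jr_degree N A k W c)"

definition max_jr_degree :: "nat set \<Rightarrow> 'c set \<Rightarrow> (nat \<Rightarrow> 'c set) \<Rightarrow> nat \<Rightarrow> nat" where
  "max_jr_degree N C A k = Max {jr_degree N A k W | W. W \<subseteq> C \<and> card W = k}"

definition av_score :: "nat set \<Rightarrow> (nat \<Rightarrow> 'c set) \<Rightarrow> 'c \<Rightarrow> nat" where
  "av_score R A c = card {i \<in> R. c \<in> A i}"

text \<open>A run of GreedyAV (with arbitrary tie-breaking) is a list ws of the candidates
  picked in order; the remaining voters before step j are those approving none of the
  first j picks.\<close>
definition greedyAV_run :: "nat set \<Rightarrow> 'c set \<Rightarrow> (nat \<Rightarrow> 'c set) \<Rightarrow> nat \<Rightarrow> 'c list \<Rightarrow> bool" where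
  "greedyAV_run N C A k ws \<longleftrightarrow> length ws = k \<and>
     (\<forall>j<k. let Wj = set (take j ws); Rj = {i \<in> N. A i \<inter> Wj = {}} in
        ws ! j \<in> C - Wj \<and>
        (\<forall>c \<in> C - Wj. av_score Rj A c \<le> av_score Rj A (ws ! j)))"

definition greedyAV_output :: "nat set \<Rightarrow> 'c set \<Rightarrow> (nat \<Rightarrow> 'c set) \<Rightarrow> nat \<Rightarrow> 'c set \<Rightarrow> bool" where
  "greedyAV_output N C A k W \<longleftrightarrow> (\<exists>ws. greedyAV_run N C A k ws \<and> W = set ws)"

end

theory Submission
  imports Defs
begin

lemma greatest_props:
  fixes N :: "nat set"
  assumes "cohesive N A k N0" "finite N"
  shows "achieves_jr_degree N A k W (jr_degree N A k W)"
    and "achieves_jr_degree N A k W c \<Longrightarrow> c \<le> jr_degree N A k W"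
proof -
  have fin0: "finite N0" using assms unfolding cohesive_def by (meson finite_subset)
  have bnd: "\<forall>y. achieves_jr_degree N A k W y \<longrightarrow> y \<le> card N0"
  proof (intro allI impI)
    fix y assume "achieves_jr_degree N A k W y"
    then have "y \<le> card {i \<in> N0. card (A i \<inter> W) \<ge> 1}"
      using assms(1) unfolding achieves_jr_degree_def by blast
    also have "\<dots> \<le> card N0" using fin0 by (intro card_mono) auto
    finally show "y \<le> card N0" .
  qed
  have z: "achieves_jr_degree N A k W 0" unfolding achieves_jr_degree_def by simp
  show "achieves_jr_degree N A k W (jr_degree N A k W)"
    unfolding jr_degree_def by (rule GreatestI_nat[where b="card N0"]) (use z bnd in auto)
  show "achieves_jr_degree N A k W c \<Longrightarrow> c \<le> jr_degree N A k W"
    unfolding jr_degree_def using Greatest_le_nat bnd by blast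
qed

theorem proposition4:
  fixes n k :: nat and C :: "'c set" and A :: "nat \<Rightarrow> 'c set" and W :: "'c set"
  assumes finC: "finite C"
    and ballots: "\<forall>i\<in>{1..n}. A i \<subseteq> C"
    and k_pos: "1 \<le> k" and k_le: "k \<le> card C"
    and has_cohesive: "\<exists>N'. cohesive {1..n} A k N'"
    and large: "int n > int k ^ 2 * (int (max_jr_degree {1..n} C A k) - 1)"
    and greedy: "greedyAV_output {1..n} C A k W"
  shows "jr_degree {1..n} A k W = max_jr_degree {1..n} C A k"
proof -
  define N where "N = {1..n}"
  define M where "M = max_jr_degree {1..n} C A k"
  obtain N0 where N0: "cohesive N A k N0" using has_cohesive N_def by blast
  have finN: "finite N" unfolding N_def by simp
  obtain ws where run: "greedyAV_run N C A k ws" and Wws: "W = set ws"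
    using greedy unfolding greedyAV_output_def N_def by blast
  have len: "length ws = k" using run unfolding greedyAV_run_def by simp
  define R where "R j = {i \<in> N. A i \<inter> set (take j ws) = {}}" for j
  have step: "ws ! j \<in> C - set (take j ws) \<and>
        (\<forall>c \<in> C - set (take j ws). av_score (R j) A c \<le> av_score (R j) A (ws ! j))"
    if "j < k" for j
    using run that unfolding greedyAV_run_def R_def Let_def by blast
  have dist: "distinct ws"
  proof (rule distinct_conv_nth[THEN iffD2], intro allI impI)
    fix i j assume ij: "i < length ws" "j < length ws" "i \<noteq> j"
    show "ws ! i \<noteq> ws ! j"
    proof
      assume eq: "ws ! i = ws ! j"
      { fix a b assume ab: "a < b" "b < k" "ws ! a = ws ! b"
        have "ws ! a \<in> set (take b ws)" using ab len
          by (metis in_set_conv_nth length_take min.absorb4 nth_take)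
        with step[OF ab(2)] ab(3) have False by simp }
      then show False using ij eq len by (metis linorder_neqE_nat)
    qed
  qed
  have WC: "W \<subseteq> C"
  proof
    fix x assume "x \<in> W"
    then obtain j where "j < k" "x = ws ! j" using Wws len by (metis in_set_conv_nth)
    then show "x \<in> C" using step by blast
  qed
  have cardW: "card W = k" using dist len Wws distinct_card by blast
  define S where "S = {jr_degree {1..n} A k W' | W'. W' \<subseteq> C \<and> card W' = k}"
  have finS: "finite S"
  proof -
    have "S \<subseteq> (\<lambda>W'. jr_degree {1..n} A k W') ` Pow C" unfolding S_def by blast
    then show ?thesis using finC by (meson finite_Pow_iff finite_imageI finite_subset)
  qed
  have inS: "jr_degree {1..n} A k W \<in> S" unfolding S_def using WC cardW by blast
  have MS: "M = Max S" unfolding M_def S_def max_jr_degree_def by simp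
  have le1: "jr_degree N A k W \<le> M" using MS finS inS N_def by simp
  have "M \<in> S" using MS finS inS by (metis Max_in empty_iff)
  then obtain W' where W': "M = jr_degree N A k W'" unfolding S_def N_def by blast
  have achM: "achieves_jr_degree N A k W' M" using greatest_props(1)[OF N0 finN] W' by simp
  have Mle: "M \<le> card N'" if "cohesive N A k N'" for N'
  proof -
    have fin': "finite N'" using that finN unfolding cohesive_def by (meson finite_subset)
    have "M \<le> card {i \<in> N'. card (A i \<inter> W') \<ge> 1}"
      using achM that unfolding achieves_jr_degree_def by blast
    also have "\<dots> \<le> card N'" using fin' by (intro card_mono) auto
    finally show ?thesis .
  qed
  have finW: "finite W" using Wws by simp
  have ach: "achieves_jr_degree N A k W M"
    unfolding achieves_jr_degree_def
  proof (intro allI impI)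
    fix N' assume coh: "cohesive N A k N'"
    show "M \<le> card {i \<in> N'. card (A i \<inter> W) \<ge> 1}"
    proof (rule ccontr)
      assume "\<not> ?thesis"
      then have tlt: "card {i \<in> N'. card (A i \<inter> W) \<ge> 1} < M" by simp
      then have Mpos: "M \<ge> 1" by simp
      have N'N: "N' \<subseteq> N" and szN': "real (card N') \<ge> real (card N) / real k"
        and int1: "card (\<Inter>i\<in>N'. A i) \<ge> 1" using coh unfolding cohesive_def by auto
      have fin': "finite N'" using N'N finN by (meson finite_subset)
      have "card N' \<ge> 1" using Mle[OF coh] Mpos by simp
      then have ne: "N' \<noteq> {}" by auto
      obtain a where a: "a \<in> (\<Inter>i\<in>N'. A i)" using int1
        by (metis One_nat_def card.empty equals0I not_less_eq_eq zero_le)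
      have aA: "\<And>i. i \<in> N' \<Longrightarrow> a \<in> A i" using a by blast
      have aC: "a \<in> C" using ne aA ballots N'N N_def by blast
      have aW: "a \<notin> W"
      proof
        assume "a \<in> W"
        then have "{i \<in> N'. card (A i \<inter> W) \<ge> 1} = N'"
          using aA finW by (auto simp: Suc_le_eq card_gt_0_iff)
        then show False using tlt Mle[OF coh] by simp
      qed
      define T where "T = {i \<in> N'. card (A i \<inter> W) \<ge> 1}"
      define s where "s = card (N' \<inter> R k)"
      have Rk: "R k = {i \<in> N. A i \<inter> W = {}}" unfolding R_def Wws using len by simp
      have part: "N' = T \<union> (N' \<inter> R k)" "T \<inter> (N' \<inter> R k) = {}"
        unfolding T_def Rk using N'N finW by (auto simp: Suc_le_eq card_gt_0_iff)
      have cN': "card N' = card T + s" unfolding s_def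
        using part fin' by (metis card_Un_disjoint finite_Int finite_subset inf_le1 Un_upper1)
      have tM: "card T + 1 \<le> M" using tlt T_def by simp
      have Rsub: "R k \<subseteq> R j" if "j \<le> k" for j
      proof
        fix i assume "i \<in> R k"
        then have "i \<in> N" "A i \<inter> set (take k ws) = {}" unfolding R_def by auto
        moreover have "set (take j ws) \<subseteq> set (take k ws)" using set_take_subset_set_take[OF that] .
        ultimately show "i \<in> R j" unfolding R_def by blast
      qed
      have sc: "av_score (R j) A (ws ! j) \<ge> s" if "j < k" for j
      proof -
        have "a \<in> C - set (take j ws)" using aC aW Wws by (meson DiffI in_set_takeD)
        then have "av_score (R j) A a \<le> av_score (R j) A (ws ! j)" using step[OF that] by blast
        moreover have "s \<le> av_score (R j) A a" unfolding s_def av_score_def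
          using Rsub[of j] that aA finN unfolding R_def
          by (intro card_mono) auto
        ultimately show ?thesis by simp
      qed
      have R0: "R 0 = N" unfolding R_def by simp
      have sc0: "av_score (R 0) A (ws ! 0) \<ge> card N'"
      proof -
        have "a \<in> C - set (take 0 ws)" using aC by simp
        then have "av_score (R 0) A a \<le> av_score (R 0) A (ws ! 0)" using step k_pos by simp
        moreover have "card N' \<le> av_score (R 0) A a" unfolding av_score_def R0
          using N'N aA finN by (intro card_mono) auto
        ultimately show ?thesis by simp
      qed
      have cnt: "card (R j) = card (R (Suc j)) + av_score (R j) A (ws ! j)" if "j < k" for j
      proof -
        have tk: "take (Suc j) ws = take j ws @ [ws ! j]" using that len by (simp add: take_Suc_conv_app_nth)
        have e1: "R (Suc j) = {i \<in> R j. ws ! j \<notin> A i}" unfolding R_def tk by auto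
        have finR: "finite (R j)" unfolding R_def using finN by simp
        have "card (R j) = card {i \<in> R j. ws ! j \<notin> A i} + card {i \<in> R j. ws ! j \<in> A i}"
          using finR by (subst card_Un_disjoint[symmetric]) (auto intro: arg_cong[where f=card])
        then show ?thesis unfolding e1 av_score_def by simp
      qed
      have ind: "j < k \<longrightarrow> card (R 1) \<ge> card (R (Suc j)) + j * s" for j
      proof (induction j)
        case 0 then show ?case by simp
      next
        case (Suc j)
        show ?case
        proof
          assume lt: "Suc j < k"
          have "card (R (Suc j)) = card (R (Suc (Suc j))) + av_score (R (Suc j)) A (ws ! Suc j)"
            using cnt[OF lt] .
          with sc[OF lt] Suc.IH lt show "card (R (Suc (Suc j))) + Suc j * s \<le> card (R 1)" by simp
        qed
      qed
      have i1: "card (R 1) \<ge> card (R k) + (k - 1) * s" using ind[of "k - 1"] k_pos by simp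
      have i2: "card (R k) \<ge> s" unfolding s_def using finN unfolding R_def by (intro card_mono) auto
      have i3: "card N = card (R 1) + av_score (R 0) A (ws ! 0)" using cnt[of 0] k_pos R0 by simp
      have cardN: "card N = n" unfolding N_def by simp
      have key: "n \<ge> card N' + k * s"
      proof -
        have "k * s = s + (k - 1) * s" using k_pos by (cases k) auto
        then show ?thesis using i1 i2 i3 sc0 cardN by linarith
      qed
      have kc: "real k * real (card N') \<ge> real n" using szN' cardN k_pos
        by (simp add: divide_le_eq mult.commute)
      define c where "c = int (card N')"
      define m where "m = int M"
      define kk where "kk = int k"
      have e1: "int n \<ge> c + kk * (c - (m - 1))"
      proof -
        have "int s \<ge> c - (m - 1)" using cN' tM unfolding c_def m_def by simp
        then have "kk * int s \<ge> kk * (c - (m - 1))" unfolding kk_def by (intro mult_left_mono) auto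
        then show ?thesis using key unfolding c_def kk_def by (metis of_nat_add of_nat_le_iff of_nat_mult add_left_mono order_trans)
      qed
      have e2: "kk * c \<ge> int n" using kc unfolding kk_def c_def
        by (metis of_int_le_iff of_int_mult of_int_of_nat_eq)
      have e3: "c \<le> kk * (m - 1)" using e1 e2 by (simp add: algebra_simps)
      have "kk * c \<le> kk * (kk * (m - 1))" using e3 unfolding kk_def by (intro mult_left_mono) auto
      then have "int n \<le> kk ^ 2 * (m - 1)" using e2 by (simp add: power2_eq_square mult.assoc)
      then show False using large unfolding kk_def m_def M_def by simp
    qed
  qed
  have "M \<le> jr_degree N A k W" using greatest_props(2)[OF N0 finN ach] .
  then show ?thesis using le1 N_def M_def by simp
qed

end
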